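(* Let $n\ge 1$. An element $f=(f_m)_{m\ge1}$ of $A^\infty_{fin}$ belongs to $A_{fin}[\widetilde{Sp}(\mathbb{A}^1_n)]$ if and only if $f_m\in R^m_n$ for every $m\ge 1$. Equivalently, $A_{fin}[\widetilde{Sp}(\mathbb{A}^1_n)]=R_n^\infty\cap A^\infty_{fin}$, which is the graded inverse limit $\varprojlim_m\big(R^m_n\cap A_m\big)$.
   Context: Fix $n\ge1$. For $m\ge1$ let $P_m=\mathbb{R}[x_{ij},y_{ij}]_{1\le i\le m,\,1\le j\le n}$, graded by total degree (every variable has degree 1). The symmetric group $S_m$ acts on $P_m$ by permuting the block index $i$ (simultaneously in the $x$ and $y$ variables); let $A_m=P_m^{S_m}$ be the invariants. Let $\pi_m:A_{m+1}\to A_m$ be the map setting $x_{m+1,j}=y_{m+1,j}=0$ for all $j$. Let $A^\infty_{fin}=\varprojlim_m A_m$, the inverse limit taken in the category of graded rings: its elements are finite sums of compatible families $(f_m)_m$ ($f_m\in A_m$, $\pi_m(f_{m+1})=f_m$) of homogeneous elements of a common degree. For a finite multiset $X=\{(\mathbf{x}_1,\mathbf{y}_1),\dots,(\mathbf{x}_r,\mathbf{y}_r)\}$ of points of $\mathbb{R}^n\times\mathbb{R}^n$ and $f\in A^\infty_{fin}$, put $\varphi_X(f)=f_m(\mathbf{x}_1,\mathbf{y}_1,\dots,\mathbf{x}_r,\mathbf{y}_r,0,\dots,0)$ for any $m\ge r$ (this is independent of $m$ and of the ordering). Call a pair $(\mathbf{z},\mathbf{z}')\in\mathbb{R}^n\times\mathbb{R}^n$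 degenerate if $z_j=z'_j$ for some $j$. Define $A_{fin}[\widetilde{Sp}(\mathbb{A}^1_n)]$ to be the set of $f\in A^\infty_{fin}$ such that $\varphi_{X\cup\{(\mathbf{z},\mathbf{z}')\}}(f)=\varphi_X(f)$ for every finite multiset $X$ and every degenerate pair $(\mathbf{z},\mathbf{z}')$. Use the coordinates $\eta_{ij}=y_{ij}-x_{ij}$, $\xi_{ij}=y_{ij}+x_{ij}$, so $P_m=\mathbb{R}[\eta_{ij},\xi_{ij}]$. Define $R^m_n\subseteq P_m$ to be the set of polynomials $f$ such that for every $i\in\{1,\dots,m\}$ and every $k\in\{1,\dots,n\}$, the polynomial obtained from $f$ by substituting $\eta_{ik}=0$ does not depend on any of the variables $\xi_{ij}$ ($1\le j\le n$) or $\eta_{ij}$ ($j\ne k$). Let $R_n^\infty=\varprojlim_m R^m_n$ (graded inverse limit along the same maps). *)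

theory Defs
  imports Complex_Main "HOL-Library.Multiset" "HOL-Combinatorics.Permutations"
begin

(* A point of R^{m x n} x R^{m x n}: values x i j, y i j (block index i < m, coordinate j < n).
   Polynomials over R are represented by their (polynomial) functions; this is faithful
   since R is an infinite field. *)
type_synonym pt = "nat \<Rightarrow> nat \<Rightarrow> real"
type_synonym pfun = "pt \<Rightarrow> pt \<Rightarrow> real"

definition sp_monom :: "nat \<Rightarrow> nat \<Rightarrow> (nat \<Rightarrow> nat \<Rightarrow> nat) \<Rightarrow> (nat \<Rightarrow> nat \<Rightarrow> nat) \<Rightarrow> pfun" where
  "sp_monom n m a b x y = (\<Prod>i<m. \<Prod>j<n. x i j ^ a i j * y i j ^ b i j)"

definition sp_mdeg :: "nat \<Rightarrow> nat \<Rightarrow> (nat \<Rightarrow> nat \<Rightarrow> nat) \<Rightarrow> (nat \<Rightarrow> nat \<Rightarrow> nat) \<Rightarrow> nat" where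
  "sp_mdeg n m a b = (\<Sum>i<m. \<Sum>j<n. a i j + b i j)"

definition sp_poly :: "nat \<Rightarrow> nat \<Rightarrow> pfun \<Rightarrow> bool" where
  "sp_poly n m F \<longleftrightarrow> (\<exists>S c. finite S \<and>
      F = (\<lambda>x y. \<Sum>(a,b)\<in>S. c (a,b) * sp_monom n m a b x y))"

definition sp_homog :: "nat \<Rightarrow> nat \<Rightarrow> nat \<Rightarrow> pfun \<Rightarrow> bool" where
  "sp_homog n m d F \<longleftrightarrow> (\<exists>S c. finite S \<and> (\<forall>(a,b)\<in>S. sp_mdeg n m a b = d) \<and>
      F = (\<lambda>x y. \<Sum>(a,b)\<in>S. c (a,b) * sp_monom n m a b x y))"

definition sp_sym :: "nat \<Rightarrow> pfun \<Rightarrow> bool" where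
  "sp_sym m F \<longleftrightarrow> (\<forall>\<sigma>. \<sigma> permutes {..<m} \<longrightarrow> (\<forall>x y. F (x \<circ> \<sigma>) (y \<circ> \<sigma>) = F x y))"

(* pi_m : A_{m+1} -> A_m, setting the (m+1)-st block (0-based index m) to zero *)
definition sp_proj :: "nat \<Rightarrow> pfun \<Rightarrow> pfun" where
  "sp_proj m F = (\<lambda>x y. F (x(m := (\<lambda>_. 0))) (y(m := (\<lambda>_. 0))))"

definition sp_compat_homog :: "nat \<Rightarrow> nat \<Rightarrow> (nat \<Rightarrow> pfun) \<Rightarrow> bool" where
  "sp_compat_homog n d g \<longleftrightarrow>
     (\<forall>m\<ge>1. sp_homog n m d (g m) \<and> sp_sym m (g m)) \<and>
     (\<forall>m\<ge>1. sp_proj m (g (Suc m)) = g m)"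

definition A_inf_fin :: "nat \<Rightarrow> (nat \<Rightarrow> pfun) \<Rightarrow> bool" where
  "A_inf_fin n f \<longleftrightarrow> (\<exists>N g. (\<forall>k\<le>N. sp_compat_homog n k (g k)) \<and>
      (\<forall>m\<ge>1. f m = (\<lambda>x y. \<Sum>k\<le>N. g k m x y)))"

definition sp_pts :: "((nat \<Rightarrow> real) \<times> (nat \<Rightarrow> real)) list \<Rightarrow> pt \<times> pt" where
  "sp_pts xs = ((\<lambda>i j. if i < length xs then fst (xs ! i) j else 0),
                (\<lambda>i j. if i < length xs then snd (xs ! i) j else 0))"

(* phi_X(f) = f_m(x_1,y_1,...,x_r,y_r,0,...,0) with m = max 1 r *)
definition sp_phi :: "(nat \<Rightarrow> pfun) \<Rightarrow> ((nat \<Rightarrow> real) \<times> (nat \<Rightarrow> real)) multiset \<Rightarrow> real" where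
  "sp_phi f X = (let xs = (SOME xs. mset xs = X); p = sp_pts xs
                 in f (max 1 (length xs)) (fst p) (snd p))"

definition sp_degenerate :: "nat \<Rightarrow> (nat \<Rightarrow> real) \<times> (nat \<Rightarrow> real) \<Rightarrow> bool" where
  "sp_degenerate n p \<longleftrightarrow> (\<exists>j<n. fst p j = snd p j)"

definition A_fin_Sp :: "nat \<Rightarrow> (nat \<Rightarrow> pfun) \<Rightarrow> bool" where
  "A_fin_Sp n f \<longleftrightarrow> A_inf_fin n f \<and>
     (\<forall>X p. sp_degenerate n p \<longrightarrow> sp_phi f (add_mset p X) = sp_phi f X)"

definition sp_upd :: "pt \<Rightarrow> nat \<Rightarrow> nat \<Rightarrow> real \<Rightarrow> pt" where
  "sp_upd v i j t = v(i := (v i)(j := t))"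

definition sp_etaxi :: "pfun \<Rightarrow> pfun" where
  "sp_etaxi F = (\<lambda>xi eta. F (\<lambda>a b. (xi a b - eta a b) / 2) (\<lambda>a b. (xi a b + eta a b) / 2))"

definition R_mn :: "nat \<Rightarrow> nat \<Rightarrow> pfun \<Rightarrow> bool" where
  "R_mn n m F \<longleftrightarrow> sp_poly n m F \<and>
     (\<forall>i<m. \<forall>k<n.
        let G = (\<lambda>xi eta. sp_etaxi F xi (sp_upd eta i k 0)) in
        (\<forall>j<n. \<forall>xi eta t. G (sp_upd xi i j t) eta = G xi eta) \<and>
        (\<forall>j<n. j \<noteq> k \<longrightarrow> (\<forall>xi eta t. G xi (sp_upd eta i j t) = G xi eta)))"

end

theory Submission
  imports Defs "HOL-Combinatorics.Permutations"
begin

lemma monom_local: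
  assumes "\<forall>a<m. \<forall>b<n. x a b = x' a b \<and> y a b = y' a b"
  shows "sp_monom n m a b x y = sp_monom n m a b x' y'"
  unfolding sp_monom_def using assms by (intro prod.cong refl) auto

lemma homog_local:
  assumes "sp_homog n m d F" "\<forall>a<m. \<forall>b<n. x a b = x' a b \<and> y a b = y' a b"
  shows "F x y = F x' y'"
proof -
  from assms(1) obtain S c where "F = (\<lambda>x y. \<Sum>(a,b)\<in>S. c (a,b) * sp_monom n m a b x y)"
    unfolding sp_homog_def by blast
  then show ?thesis using monom_local[OF assms(2)] by simp
qed

lemma homog_poly: "sp_homog n m d F \<Longrightarrow> sp_poly n m F"
  unfolding sp_homog_def sp_poly_def by blast

lemma poly_add:
  assumes "sp_poly n m F" "sp_poly n m G"
  shows "sp_poly n m (\<lambda>x y. F x y + G x y)"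
proof -
  obtain S c where S: "finite S" "F = (\<lambda>x y. \<Sum>(a,b)\<in>S. c (a,b) * sp_monom n m a b x y)"
    using assms(1) unfolding sp_poly_def by blast
  obtain T e where T: "finite T" "G = (\<lambda>x y. \<Sum>(a,b)\<in>T. e (a,b) * sp_monom n m a b x y)"
    using assms(2) unfolding sp_poly_def by blast
  define h where "h = (\<lambda>p. (if p \<in> S then c p else 0) + (if p \<in> T then e p else 0))"
  have "(\<lambda>x y. F x y + G x y) = (\<lambda>x y. \<Sum>(a,b)\<in>S \<union> T. h (a,b) * sp_monom n m a b x y)"
  proof (intro ext)
    fix x y
    have "(\<Sum>(a,b)\<in>S \<union> T. h (a,b) * sp_monom n m a b x y)
      = (\<Sum>p\<in>S \<union> T. (if p \<in> S then c p * sp_monom n m (fst p) (snd p) x y else 0))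
       + (\<Sum>p\<in>S \<union> T. (if p \<in> T then e p * sp_monom n m (fst p) (snd p) x y else 0))"
      unfolding sum.distrib[symmetric] h_def by (intro sum.cong refl) (auto simp: split_def distrib_right)
    also have "\<dots> = (\<Sum>p\<in>S. c p * sp_monom n m (fst p) (snd p) x y) + (\<Sum>p\<in>T. e p * sp_monom n m (fst p) (snd p) x y)"
      using S(1) T(1) by (simp add: sum.If_cases Int_absorb1 Int_absorb2)
    finally show "F x y + G x y = (\<Sum>(a,b)\<in>S \<union> T. h (a,b) * sp_monom n m a b x y)"
      using S T by (simp add: split_def)
  qed
  then show ?thesis unfolding sp_poly_def using S(1) T(1) by blast
qed

lemma poly_zero: "sp_poly n m (\<lambda>x y. 0)"
  unfolding sp_poly_def by (rule exI[of _ "{}"]) auto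

lemma poly_sum: assumes "finite K" "\<And>k. k \<in> K \<Longrightarrow> sp_poly n m (g k)"
  shows "sp_poly n m (\<lambda>x y. \<Sum>k\<in>K. g k x y)"
  using assms
proof (induction K rule: finite_induct)
  case empty then show ?case by (simp add: poly_zero)
next
  case (insert a K)
  then show ?case using poly_add[of n m "g a" "\<lambda>x y. \<Sum>k\<in>K. g k x y"] by simp
qed

locale fam =
  fixes n :: nat and f :: "nat \<Rightarrow> pfun"
  assumes A: "A_inf_fin n f"
begin

lemma basics:
  assumes "m \<ge> 1"
  shows "sp_poly n m (f m)"
    "\<And>x y x' y'. (\<forall>a<m. \<forall>b<n. x a b = x' a b \<and> y a b = y' a b) \<Longrightarrow> f m x y = f m x' y'"
    "sp_sym m (f m)"
    "sp_proj m (f (Suc m)) = f m"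
proof -
  obtain N g where g: "\<forall>k\<le>N. sp_compat_homog n k (g k)" "\<forall>m\<ge>1. f m = (\<lambda>x y. \<Sum>k\<le>N. g k m x y)"
    using A unfolding A_inf_fin_def by blast
  have fm: "f m = (\<lambda>x y. \<Sum>k\<le>N. g k m x y)" and fsm: "f (Suc m) = (\<lambda>x y. \<Sum>k\<le>N. g k (Suc m) x y)"
    using g(2) assms by auto
  have h: "\<And>k. k \<le> N \<Longrightarrow> sp_homog n m k (g k m) \<and> sp_sym m (g k m) \<and> sp_proj m (g k (Suc m)) = g k m"
    using g(1) assms unfolding sp_compat_homog_def by blast
  show "sp_poly n m (f m)" unfolding fm by (rule poly_sum) (use h homog_poly in blast)+
  show "f m x y = f m x' y'" if "\<forall>a<m. \<forall>b<n. x a b = x' a b \<and> y a b = y' a b" for x y x' y'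
    unfolding fm using h homog_local[OF _ that] by (intro sum.cong) auto
  show "sp_sym m (f m)" unfolding sp_sym_def fm
  proof (intro allI impI)
    fix \<sigma> x y assume "\<sigma> permutes {..<m}"
    then show "(\<Sum>k\<le>N. g k m (x \<circ> \<sigma>) (y \<circ> \<sigma>)) = (\<Sum>k\<le>N. g k m x y)"
      using h unfolding sp_sym_def by (intro sum.cong) auto
  qed
  show "sp_proj m (f (Suc m)) = f m"
    unfolding fm fsm sp_proj_def
  proof (intro ext sum.cong refl)
    fix x y k assume "k \<in> {..N}"
    then have "sp_proj m (g k (Suc m)) x y = g k m x y" using h by auto
    then show "g k (Suc m) (x(m := \<lambda>_. 0)) (y(m := \<lambda>_. 0)) = g k m x y" unfolding sp_proj_def .
  qed
qed


definition ev :: "nat \<Rightarrow> ((nat \<Rightarrow> real) \<times> (nat \<Rightarrow> real)) list \<Rightarrow> real" where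
  "ev M xs = f M (fst (sp_pts xs)) (snd (sp_pts xs))"

lemma ev_Suc: assumes "length xs \<le> M" "1 \<le> M" shows "ev (Suc M) xs = ev M xs"
proof -
  have "ev M xs = sp_proj M (f (Suc M)) (fst (sp_pts xs)) (snd (sp_pts xs))"
    using basics(4)[OF assms(2)] unfolding ev_def by simp
  also have "\<dots> = ev (Suc M) xs"
  proof -
    have "(fst (sp_pts xs))(M := \<lambda>_. 0) = fst (sp_pts xs)" "(snd (sp_pts xs))(M := \<lambda>_. 0) = snd (sp_pts xs)"
      using assms(1) by (auto simp: sp_pts_def fun_eq_iff)
    then show ?thesis unfolding sp_proj_def ev_def by simp
  qed
  finally show ?thesis by simp
qed

lemma ev_mono: assumes "length xs \<le> M" "1 \<le> M" "M \<le> M'" shows "ev M' xs = ev M xs"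
  using assms(3)
proof (induction M' rule: dec_induct)
  case base then show ?case by simp
next
  case (step k) then show ?case using ev_Suc[of xs k] assms by simp
qed

lemma ev_perm: assumes "mset xs = mset ys" "length ys \<le> M" "1 \<le> M" shows "ev M xs = ev M ys"
proof -
  obtain p where p: "p permutes {..<length ys}" "permute_list p ys = xs"
    using mset_eq_permutation[OF assms(1)] by blast
  have L: "length xs = length ys" using p(2) by auto
  have pM: "p permutes {..<M}" using permutes_subset[OF p(1)] assms(2) by auto
  have key: "(i < length ys \<longrightarrow> xs ! i = ys ! p i \<and> p i < length ys) \<and> (\<not> i < length ys \<longrightarrow> p i = i)" for i
    using permute_list_nth[OF p(1)] p(2) permutes_in_image[OF p(1)] p(1) permutes_not_in by fastforce
  have "fst (sp_pts xs) = fst (sp_pts ys) \<circ> p \<and> snd (sp_pts xs) = snd (sp_pts ys) \<circ> p"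
    using key L by (auto simp: sp_pts_def fun_eq_iff)
  then show ?thesis using basics(3)[OF assms(3)] pM unfolding ev_def sp_sym_def by simp
qed

lemma phi_eq: assumes "mset xs = X" "length xs \<le> M" "1 \<le> M" shows "sp_phi f X = ev M xs"
proof -
  define ys where "ys = (SOME ys. mset ys = X)"
  have ys: "mset ys = X" unfolding ys_def by (rule someI_ex) (rule ex_mset)
  have L: "length ys = length xs" using ys assms(1) by (metis size_mset)
  have "sp_phi f X = ev (max 1 (length ys)) ys" unfolding sp_phi_def ev_def ys_def[symmetric] by (simp add: Let_def)
  also have "\<dots> = ev M ys" using ev_mono[of ys "max 1 (length ys)" M] assms L by simp
  also have "\<dots> = ev M xs" using ev_perm[of ys xs M] ys assms L by simp
  finally show ?thesis .
qed


definition zr :: "nat \<Rightarrow> nat \<Rightarrow> nat \<Rightarrow> bool" where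
  "zr m i k \<longleftrightarrow> (\<forall>x y. x i k = y i k \<longrightarrow> f m x y = f m (x(i := \<lambda>_. 0)) (y(i := \<lambda>_. 0)))"

lemma part1:
  assumes S: "A_fin_Sp n f" and m: "1 \<le> m" "i < m" "k < n"
  shows "zr m i k"
  unfolding zr_def
proof (intro allI impI)
  fix x y :: pt assume xy: "x i k = y i k"
  define xs where "xs = map (\<lambda>a. (x a, y a)) [0..<m]"
  define z0 :: "(nat \<Rightarrow> real) \<times> (nat \<Rightarrow> real)" where "z0 = (\<lambda>_. 0, \<lambda>_. 0)"
  define zs where "zs = take i xs @ drop (Suc i) xs"
  have Lxs: "length xs = m" unfolding xs_def by simp
  have Lzs: "length zs = m - 1" unfolding zs_def using Lxs m by simp
  have xsi: "xs ! i = (x i, y i)" unfolding xs_def using m by simp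
  have dec: "xs = take i xs @ xs ! i # drop (Suc i) xs" by (rule id_take_nth_drop) (use m Lxs in simp)
  have msx: "mset xs = add_mset (x i, y i) (mset zs)"
    by (subst dec) (simp add: zs_def xsi)
  have deg: "sp_degenerate n (x i, y i)" unfolding sp_degenerate_def using xy m by auto
  have e1: "f m x y = ev m xs"
    unfolding ev_def by (rule basics(2)[OF m(1)]) (auto simp: sp_pts_def xs_def Lxs)
  have "ev m xs = sp_phi f (add_mset (x i, y i) (mset zs))" using phi_eq[OF msx _ m(1)] Lxs by simp
  also have "\<dots> = sp_phi f (mset zs)" using S deg unfolding A_fin_Sp_def by blast
  also have "\<dots> = ev m zs" using phi_eq[of zs _ m] Lzs m by simp
  also have "\<dots> = ev m (zs @ [z0])"
  proof -
    have "sp_pts (zs @ [z0]) = sp_pts zs"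
      by (auto simp: sp_pts_def z0_def fun_eq_iff nth_append)
    then show ?thesis unfolding ev_def by simp
  qed
  also have "\<dots> = ev m (xs[i := z0])"
  proof -
    have "xs[i := z0] = take i xs @ z0 # drop (Suc i) xs" by (rule upd_conv_take_nth_drop) (use m Lxs in simp)
    then have "mset (xs[i := z0]) = mset (zs @ [z0])" by (simp add: zs_def)
    then show ?thesis using ev_perm[of "xs[i := z0]" "zs @ [z0]" m] Lzs m by simp
  qed
  also have "\<dots> = f m (x(i := \<lambda>_. 0)) (y(i := \<lambda>_. 0))"
    unfolding ev_def by (rule basics(2)[OF m(1)]) (auto simp: sp_pts_def xs_def Lxs z0_def nth_list_update)
  finally show "f m x y = f m (x(i := \<lambda>_. 0)) (y(i := \<lambda>_. 0))" using e1 by simp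
qed

lemma part2:
  assumes Z: "\<forall>m\<ge>1. \<forall>i<m. \<forall>k<n. zr m i k" and deg: "sp_degenerate n p"
  shows "sp_phi f (add_mset p X) = sp_phi f X"
proof -
  obtain ys where ys: "mset ys = X" using ex_mset by blast
  define r where "r = length ys"
  obtain k where k: "k < n" "fst p k = snd p k" using deg unfolding sp_degenerate_def by blast
  have "sp_phi f (add_mset p X) = ev (Suc r) (ys @ [p])" using phi_eq[of "ys @ [p]" _ "Suc r"] ys r_def by simp
  also have "\<dots> = f (Suc r) ((fst (sp_pts (ys @ [p])))(r := \<lambda>_. 0)) ((snd (sp_pts (ys @ [p])))(r := \<lambda>_. 0))"
  proof -
    have "zr (Suc r) r k" using Z k by simp
    moreover have "fst (sp_pts (ys @ [p])) r k = snd (sp_pts (ys @ [p])) r k" using k by (simp add: sp_pts_def r_def)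
    ultimately show ?thesis unfolding zr_def ev_def by blast
  qed
  also have "\<dots> = ev (Suc r) ys"
  proof -
    have "(fst (sp_pts (ys @ [p])))(r := \<lambda>_. 0) = fst (sp_pts ys)" "(snd (sp_pts (ys @ [p])))(r := \<lambda>_. 0) = snd (sp_pts ys)"
      by (auto simp: sp_pts_def fun_eq_iff nth_append r_def)
    then show ?thesis unfolding ev_def by simp
  qed
  also have "\<dots> = sp_phi f X" using phi_eq[of ys X "Suc r"] ys r_def by simp
  finally show ?thesis .
qed

lemma upd_iter:
  fixes G :: "pt \<Rightarrow> real"
  assumes H: "\<And>v j t. j < n \<Longrightarrow> G (sp_upd v i j t) = G v"
  shows "j \<le> n \<Longrightarrow> G (\<lambda>a b. if a = i \<and> b < j then 0 else v a b) = G v"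
proof (induction j)
  case 0 then show ?case by simp
next
  case (Suc j)
  have "(\<lambda>a b. if a = i \<and> b < Suc j then 0 else v a b) = sp_upd (\<lambda>a b. if a = i \<and> b < j then 0 else v a b) i j 0"
    by (auto simp: sp_upd_def fun_eq_iff)
  then show ?case using H[of j] Suc by simp
qed

lemma part3:
  assumes m: "1 \<le> m" "i < m" "k < n"
  shows "zr m i k \<longleftrightarrow> (let G = (\<lambda>xi eta. sp_etaxi (f m) xi (sp_upd eta i k 0)) in
        (\<forall>j<n. \<forall>xi eta t. G (sp_upd xi i j t) eta = G xi eta) \<and>
        (\<forall>j<n. j \<noteq> k \<longrightarrow> (\<forall>xi eta t. G xi (sp_upd eta i j t) = G xi eta)))"
    (is "_ \<longleftrightarrow> (let G = ?G in ?P G)")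
proof
  assume z: "zr m i k"
  have zz: "\<And>X Y. X i k = Y i k \<Longrightarrow> f m X Y = f m (X(i := \<lambda>_. 0)) (Y(i := \<lambda>_. 0))"
    using z unfolding zr_def by blast
  have gen: "?G xi eta = ?G xi' eta'" if that: "\<forall>a b. a \<noteq> i \<longrightarrow> xi a b = xi' a b \<and> eta a b = eta' a b" for xi eta xi' eta'
  proof -
    define X where "X = (\<lambda>xi eta. (\<lambda>a b. (xi a b - sp_upd eta i k 0 a b) / (2::real)))"
    define Y where "Y = (\<lambda>xi eta. (\<lambda>a b. (xi a b + sp_upd eta i k 0 a b) / (2::real)))"
    have e: "?G u v = f m (X u v) (Y u v)" for u v unfolding sp_etaxi_def X_def Y_def ..
    have c: "X u v i k = Y u v i k" for u v by (simp add: sp_upd_def X_def Y_def)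
    have d: "(X xi eta)(i := \<lambda>_. 0) = (X xi' eta')(i := \<lambda>_. 0)" "(Y xi eta)(i := \<lambda>_. 0) = (Y xi' eta')(i := \<lambda>_. 0)"
      using that by (simp_all add: fun_eq_iff sp_upd_def X_def Y_def)
    show ?thesis unfolding e using zz[of "X xi eta" "Y xi eta", OF c] zz[of "X xi' eta'" "Y xi' eta'", OF c] d by simp
  qed
  have u1: "\<forall>a b. a \<noteq> i \<longrightarrow> sp_upd v i j t a b = v a b \<and> w a b = w a b" for v w j t
    by (simp add: sp_upd_def)
  have u2: "\<forall>a b. a \<noteq> i \<longrightarrow> v a b = v a b \<and> sp_upd w i j t a b = w a b" for v w j t
    by (simp add: sp_upd_def)
  show "let G = ?G in ?P G" unfolding Let_def
    using gen[OF u1] gen[OF u2] by blast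
next
  assume P: "let G = ?G in ?P G"
  have H1: "\<And>j xi eta t. j < n \<Longrightarrow> ?G (sp_upd xi i j t) eta = ?G xi eta"
    using P unfolding Let_def by blast
  have H2: "?G xi (sp_upd eta i j t) = ?G xi eta" if "j < n" for j xi eta t
  proof (cases "j = k")
    case True
    have "sp_upd (sp_upd eta i j t) i k 0 = sp_upd eta i k 0" using True by (simp add: sp_upd_def)
    then show ?thesis by simp
  next
    case False then show ?thesis using P that unfolding Let_def by blast
  qed
  show "zr m i k" unfolding zr_def
  proof (intro allI impI)
    fix x y :: pt assume xy: "x i k = y i k"
    define xi where "xi = (\<lambda>a b. x a b + y a b)"
    define eta where "eta = (\<lambda>a b. y a b - x a b)"
    define xi0 where "xi0 = (\<lambda>a b. if a = i \<and> b < n then 0 else xi a b)"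
    define eta0 where "eta0 = (\<lambda>a b. if a = i \<and> b < n then 0 else eta a b)"
    have "f m x y = ?G xi eta"
    proof -
      have "sp_upd eta i k 0 = eta" using xy by (auto simp: sp_upd_def eta_def fun_eq_iff)
      moreover have "(\<lambda>a b. (xi a b - eta a b) / 2) = x" "(\<lambda>a b. (xi a b + eta a b) / 2) = y"
        by (auto simp: xi_def eta_def fun_eq_iff)
      ultimately show ?thesis by (simp add: sp_etaxi_def)
    qed
    also have "\<dots> = ?G xi0 eta"
      unfolding xi0_def using upd_iter[of "\<lambda>v. ?G v eta" i n xi] H1 by simp
    also have "\<dots> = ?G xi0 eta0"
      unfolding eta0_def using upd_iter[of "\<lambda>v. ?G xi0 v" i n eta] H2 by simp
    also have "\<dots> = f m (x(i := \<lambda>_. 0)) (y(i := \<lambda>_. 0))"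
      unfolding sp_etaxi_def by (rule basics(2)[OF m(1)]) (auto simp: sp_upd_def xi0_def eta0_def xi_def eta_def)
    finally show "f m x y = f m (x(i := \<lambda>_. 0)) (y(i := \<lambda>_. 0))" .
  qed
qed

end

theorem proposition2p4:
  fixes n :: nat and f :: "nat \<Rightarrow> pfun"
  assumes "n \<ge> 1" and "A_inf_fin n f"
  shows "A_fin_Sp n f \<longleftrightarrow> (\<forall>m\<ge>1. R_mn n m (f m))"
proof -
  interpret fam n f using assms(2) by unfold_locales
  show ?thesis
  proof
    assume S: "A_fin_Sp n f"
    show "\<forall>m\<ge>1. R_mn n m (f m)"
      unfolding R_mn_def using basics(1) part1[OF S] part3 by blast
  next
    assume R: "\<forall>m\<ge>1. R_mn n m (f m)"
    have "\<forall>m\<ge>1. \<forall>i<m. \<forall>k<n. zr m i k"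
      using R part3 unfolding R_mn_def by blast
    then show "A_fin_Sp n f" unfolding A_fin_Sp_def using assms(2) part2 by blast
  qed
qed

end
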